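(* Let $X$ be a finite set, $\mathcal{T}_X$ the full transformation semigroup on $X$, and $(\mathcal{T}_X,\leq)$ the ordered full transformation semigroup with the natural partial order. For $f,g\in\mathcal{T}_X$, $f\,\mathscr{L}\,g$ in the ordered semigroup $(\mathcal{T}_X,\leq)$ if and only if $f\,\mathscr{L}\,g$ in the semigroup $\mathcal{T}_X$.
   Context: $\mathcal{T}_X$ is the semigroup of all maps $X\to X$ under composition, with maps written on the right and composed left to right, so that $\operatorname{Im}(\alpha g)\subseteq\operatorname{Im} g$. The natural partial order: $f\leq g$ iff $f\mathcal{T}_X^1\subseteq g\mathcal{T}_X^1$ and $f=\alpha f=\alpha g$ for some $\alpha\in\mathcal{T}_X$; with it, $(\mathcal{T}_X,\leq)$ is a regular ordered semigroup. In an ordered semigroup $S$, $a\,\mathscr{L}\,b$ iff $(a\cup Sa]=(b\cup Sb]$, where $(A]=\{x: x\leq a\text{ for some }a\in A\}$. In the plain semigroup $\mathcal{T}_X$, $\mathscr{L}$ is the usual Green's relation ($f\,\mathscr{L}\,g$ iff $\mathcal{T}_X^1 f=\mathcal{T}_X^1 g$, equivalently $\operatorname{Im}f=\operatorname{Im}g$). *)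

theory Defs
  imports Main
begin

text \<open>Full transformation semigroup T_X on a finite type 'a (X = UNIV).
  Maps are written on the right and composed left to right:
  x (f g) = (x f) g, so the product f g is the function g o f.\<close>

definition tmul :: "('a \<Rightarrow> 'a) \<Rightarrow> ('a \<Rightarrow> 'a) \<Rightarrow> ('a \<Rightarrow> 'a)" where
  "tmul f g = g \<circ> f"

definition right_ideal1 :: "('a \<Rightarrow> 'a) \<Rightarrow> ('a \<Rightarrow> 'a) set" where
  "right_ideal1 f = {f} \<union> {tmul f h | h. True}"

definition left_ideal1 :: "('a \<Rightarrow> 'a) \<Rightarrow> ('a \<Rightarrow> 'a) set" where
  "left_ideal1 f = {f} \<union> {tmul h f | h. True}"

definition nat_le :: "('a \<Rightarrow> 'a) \<Rightarrow> ('a \<Rightarrow> 'a) \<Rightarrow> bool" where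
  "nat_le f g \<longleftrightarrow> right_ideal1 f \<subseteq> right_ideal1 g \<and>
     (\<exists>\<alpha>. f = tmul \<alpha> f \<and> f = tmul \<alpha> g)"

definition down :: "('a \<Rightarrow> 'a) set \<Rightarrow> ('a \<Rightarrow> 'a) set" where
  "down A = {x. \<exists>a\<in>A. nat_le x a}"

definition ordL :: "('a \<Rightarrow> 'a) \<Rightarrow> ('a \<Rightarrow> 'a) \<Rightarrow> bool" where
  "ordL f g \<longleftrightarrow>
     down ({f} \<union> {tmul s f | s. True}) = down ({g} \<union> {tmul s g | s. True})"

definition semL :: "('a \<Rightarrow> 'a) \<Rightarrow> ('a \<Rightarrow> 'a) \<Rightarrow> bool" where
  "semL f g \<longleftrightarrow> left_ideal1 f = left_ideal1 g"

end

theory Submission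
  imports Defs
begin

lemma down_left: "down (left_ideal1 f) = left_ideal1 f"
proof
  show "left_ideal1 f \<subseteq> down (left_ideal1 f)"
  proof
    fix x assume x: "x \<in> left_ideal1 f"
    have "nat_le x x" unfolding nat_le_def
      by (rule conjI, simp, rule exI[of _ id], simp add: tmul_def)
    thus "x \<in> down (left_ideal1 f)" using x unfolding down_def by blast
  qed
next
  show "down (left_ideal1 f) \<subseteq> left_ideal1 f"
  proof
    fix x assume "x \<in> down (left_ideal1 f)"
    then obtain a \<alpha> where a: "a \<in> left_ideal1 f" and xa: "x = tmul \<alpha> a"
      unfolding down_def nat_le_def by blast
    from a show "x \<in> left_ideal1 f"
    proof (unfold left_ideal1_def, elim UnE)
      assume "a \<in> {f}" thus "x \<in> {f} \<union> {tmul h f |h. True}" using xa by auto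
    next
      assume "a \<in> {tmul h f |h. True}"
      then obtain h where "a = tmul h f" by blast
      hence "x = tmul (tmul \<alpha> h) f" using xa by (simp add: tmul_def comp_assoc)
      thus "x \<in> {f} \<union> {tmul h f |h. True}" by blast
    qed
  qed
qed

theorem mainTheorem6:
  fixes f g :: "'a::finite \<Rightarrow> 'a"
  shows "ordL f g \<longleftrightarrow> semL f g"
proof -
  have e: "\<And>f. {f} \<union> {tmul s f | s. True} = left_ideal1 f" by (simp add: left_ideal1_def)
  show ?thesis unfolding ordL_def semL_def e down_left ..
qed

end
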